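(* Let $\mathcal{C}\subseteq\mathbb{F}_q^n$ be a perfect $t$-error-correcting code with $|\mathcal{C}|\ge 2$, i.e. $\mathcal{C}$ has minimum distance $2t+1$ and $|\mathcal{C}|\cdot\sum_{i=0}^{t}\binom{n}{i}(q-1)^i=q^n$. Then the minimum-distance graph $G(\mathcal{C})$ is connected.
   Context: $d(\cdot,\cdot)$ is Hamming distance. The minimum-distance graph $G(\mathcal{C})$ of a code $\mathcal{C}$ is the graph with vertex set $\mathcal{C}$ in which distinct $c_1,c_2$ are adjacent iff $d(c_1,c_2)=d_{\min}(\mathcal{C})$, the minimum distance of $\mathcal{C}$. *)

theory Defs
  imports Main "HOL-Library.Cardinality"
begin

definition hamming_dist :: "'a list \<Rightarrow> 'a list \<Rightarrow> nat" where
  "hamming_dist x y = card {i. i < length x \<and> x ! i \<noteq> y ! i}"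

definition min_dist :: "'a list set \<Rightarrow> nat" where
  "min_dist C = Min {hamming_dist x y | x y. x \<in> C \<and> y \<in> C \<and> x \<noteq> y}"

definition mdg_adj :: "'a list set \<Rightarrow> 'a list \<Rightarrow> 'a list \<Rightarrow> bool" where
  "mdg_adj C x y \<longleftrightarrow> x \<in> C \<and> y \<in> C \<and> x \<noteq> y \<and> hamming_dist x y = min_dist C"

definition mdg_connected :: "'a list set \<Rightarrow> bool" where
  "mdg_connected C \<longleftrightarrow> (\<forall>x\<in>C. \<forall>y\<in>C. (mdg_adj C)\<^sup>*\<^sup>* x y)"

end

theory Submission
  imports Defs
begin



lemma hd_cons:
  assumes "length x = length y"
  shows "hamming_dist (a#x) (b#y) = (if a = b then 0 else 1) + hamming_dist x y"
proof -
  have e: "{i. i < length (a#x) \<and> (a#x)!i \<noteq> (b#y)!i} =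
     (if a = b then {} else {0}) \<union> Suc ` {i. i < length x \<and> x!i \<noteq> y!i}"
  proof (rule set_eqI)
    fix i show "i \<in> {i. i < length (a#x) \<and> (a#x)!i \<noteq> (b#y)!i} \<longleftrightarrow>
      i \<in> (if a = b then {} else {0}) \<union> Suc ` {i. i < length x \<and> x!i \<noteq> y!i}"
      by (cases i) auto
  qed
  show ?thesis unfolding hamming_dist_def e
    by (subst card_Un_disjoint) (auto simp: card_image)
qed

lemma hd_eq0:
  assumes "length x = length y"
  shows "hamming_dist x y = 0 \<longleftrightarrow> x = y"
proof
  assume "hamming_dist x y = 0"
  hence "{i. i < length x \<and> x!i \<noteq> y!i} = {}" unfolding hamming_dist_def by simp
  thus "x = y" using assms by (intro nth_equalityI) auto
qed (simp add: hamming_dist_def)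

lemma hd_sym:
  assumes "length x = length y"
  shows "hamming_dist x y = hamming_dist y x"
proof -
  have "{i. i < length x \<and> x!i \<noteq> y!i} = {i. i < length y \<and> y!i \<noteq> x!i}" using assms by auto
  thus ?thesis unfolding hamming_dist_def by simp
qed
lemma hd_tri:
  assumes "length x = length y" "length y = length z"
  shows "hamming_dist x z \<le> hamming_dist x y + hamming_dist y z"
proof -
  have "{i. i < length x \<and> x!i \<noteq> z!i} \<subseteq> {i. i < length x \<and> x!i \<noteq> y!i} \<union> {i. i < length y \<and> y!i \<noteq> z!i}"
    using assms by auto
  hence "card {i. i < length x \<and> x!i \<noteq> z!i} \<le> card ({i. i < length x \<and> x!i \<noteq> y!i} \<union> {i. i < length y \<and> y!i \<noteq> z!i})"
    by (intro card_mono) auto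
  also have "\<dots> \<le> card {i. i < length x \<and> x!i \<noteq> y!i} + card {i. i < length y \<and> y!i \<noteq> z!i}"
    by (rule card_Un_le)
  finally show ?thesis unfolding hamming_dist_def .
qed


lemma sphere_card:
  "card {w. length w = length (c::('a::finite) list) \<and> hamming_dist c w = i}
     = (length c choose i) * (CARD('a) - 1) ^ i"
proof (induction c arbitrary: i)
  case Nil
  have "{w. length w = length ([]::'a list) \<and> hamming_dist [] w = i} = (if i = 0 then {[]} else {})"
    by (auto simp: hamming_dist_def)
  then show ?case by (subst \<open>_ = _\<close>) (cases i, auto)
next
  case (Cons a c)
  show ?case
  proof (cases i)
    case 0
    have "{w. length w = length (a#c) \<and> hamming_dist (a#c) w = i} = {a#c}"
      using 0 hd_eq0[of "a#c"] by auto
    then show ?thesis using 0 by simp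
  next
    case (Suc j)
    let ?S = "\<lambda>k. {w. length w = length c \<and> hamming_dist c w = k}"
    let ?A = "(\<lambda>w. a#w) ` ?S (Suc j)"
    let ?B = "(\<lambda>(b,w). b#w) ` ((UNIV - {a}) \<times> ?S j)"
    have e: "{w. length w = length (a#c) \<and> hamming_dist (a#c) w = i} = ?A \<union> ?B"
    proof (rule set_eqI, rule iffI)
      fix w assume w0: "w \<in> {w. length w = length (a#c) \<and> hamming_dist (a#c) w = i}"
      then obtain b w' where w: "w = b#w'" by (cases w) auto
      have l: "length w' = length c" and h: "hamming_dist (a#c) (b#w') = Suc j"
        using w0 w Suc by auto
      have h2: "(if a = b then 0 else 1) + hamming_dist c w' = Suc j"
        using h hd_cons[of c w' a b] l by simp
      show "w \<in> ?A \<union> ?B"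
      proof (cases "a = b")
        case True
        then show ?thesis using h2 l w by auto
      next
        case False
        then have "(b, w') \<in> (UNIV - {a}) \<times> ?S j" using h2 l by auto
        then show ?thesis unfolding w by blast
      qed
    next
      fix w assume "w \<in> ?A \<union> ?B"
      then show "w \<in> {w. length w = length (a#c) \<and> hamming_dist (a#c) w = i}"
        using Suc by (auto simp: hd_cons)
    qed
    have fin: "finite (?S k)" for k
      by (rule finite_subset[OF _ finite_lists_length_eq[of "UNIV::'a set" "length c"]]) auto
    have "card (?A \<union> ?B) = card ?A + card ?B"
      by (rule card_Un_disjoint) (use fin in auto)
    also have "card ?A = card (?S (Suc j))"
      by (rule card_image) auto
    also have "card ?B = card ((UNIV - {a}) \<times> ?S j)"
      by (rule card_image) (auto simp: inj_on_def)
    also have "\<dots> = (CARD('a) - 1) * card (?S j)"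
      by (simp add: card_cartesian_product card_Diff_singleton)
    finally have "card (?A \<union> ?B) = (length c choose Suc j) * (CARD('a) - 1) ^ Suc j
        + (CARD('a) - 1) * ((length c choose j) * (CARD('a) - 1) ^ j)"
      by (simp only: Cons.IH)
    also have "\<dots> = (length (a#c) choose i) * (CARD('a) - 1) ^ i"
      unfolding Suc by (simp only: length_Cons binomial_Suc_Suc) (simp add: algebra_simps)
    finally show ?thesis unfolding e .
  qed
qed

theorem theorem8:
  fixes C :: "('a::{finite,field}) list set" and n t :: nat
  assumes "C \<subseteq> {x. length x = n}"
    and "card C \<ge> 2"
    and "min_dist C = 2 * t + 1"
    and "card C * (\<Sum>i\<le>t. (n choose i) * (CARD('a) - 1) ^ i) = CARD('a) ^ n"
  shows "mdg_connected C"
proof -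
  define W where "W = {x::'a list. length x = n}"
  have finW: "finite W" unfolding W_def
    using finite_lists_length_eq[of "UNIV::'a set" n] by simp
  have cardW: "card W = CARD('a) ^ n" unfolding W_def
    using card_lists_length_eq[of "UNIV::'a set" n] by simp
  have CW: "C \<subseteq> W" using assms(1) unfolding W_def .
  have finC: "finite C" using finite_subset[OF CW finW] .
  have lenC: "c \<in> C \<Longrightarrow> length c = n" for c using CW unfolding W_def by auto
  have mind: "2 * t + 1 \<le> hamming_dist c1 c2" if "c1 \<in> C" "c2 \<in> C" "c1 \<noteq> c2" for c1 c2
  proof -
    have "finite {hamming_dist x y | x y. x \<in> C \<and> y \<in> C \<and> x \<noteq> y}"
      by (rule finite_subset[of _ "(\<lambda>(x,y). hamming_dist x y) ` (C \<times> C)"]) (use finC in auto)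
    hence "min_dist C \<le> hamming_dist c1 c2" unfolding min_dist_def
      by (rule Min_le) (use that in auto)
    thus ?thesis using assms(3) by simp
  qed
  define B where "B c = {w. length w = n \<and> hamming_dist c w \<le> t}" for c :: "'a list"
  have cardB: "card (B c) = (\<Sum>i\<le>t. (n choose i) * (CARD('a) - 1) ^ i)" if "c \<in> C" for c
  proof -
    let ?S = "\<lambda>i. {w. length w = length c \<and> hamming_dist c w = i}"
    have "B c = (\<Union>i\<in>{..t}. ?S i)" unfolding B_def using lenC[OF that] by auto
    moreover have "finite (?S i)" for i
      by (rule finite_subset[OF _ finW]) (auto simp: W_def lenC[OF that])
    ultimately have "card (B c) = (\<Sum>i\<le>t. card (?S i))"
      by (simp only:) (rule card_UN_disjoint, auto)
    also have "\<dots> = (\<Sum>i\<le>t. (n choose i) * (CARD('a) - 1) ^ i)"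
      using sphere_card[of c, unfolded lenC[OF that]] by (simp add: lenC[OF that])
    finally show ?thesis .
  qed
  have disj: "B c1 \<inter> B c2 = {}" if "c1 \<in> C" "c2 \<in> C" "c1 \<noteq> c2" for c1 c2
  proof (rule ccontr)
    assume "B c1 \<inter> B c2 \<noteq> {}"
    then obtain w where w: "w \<in> B c1" "w \<in> B c2" by blast
    have "hamming_dist c1 c2 \<le> hamming_dist c1 w + hamming_dist w c2"
      by (rule hd_tri) (use w lenC that in \<open>auto simp: B_def\<close>)
    also have "hamming_dist w c2 = hamming_dist c2 w"
      by (rule hd_sym) (use w lenC that in \<open>auto simp: B_def\<close>)
    finally have "hamming_dist c1 c2 \<le> 2 * t" using w unfolding B_def by simp
    thus False using mind[OF that] by simp
  qed
  have finB: "finite (B c)" for c by (rule finite_subset[OF _ finW]) (auto simp: B_def W_def)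
  have BW: "(\<Union>c\<in>C. B c) \<subseteq> W" unfolding B_def W_def by auto
  have "card (\<Union>c\<in>C. B c) = (\<Sum>c\<in>C. card (B c))"
    by (rule card_UN_disjoint) (use finC disj finB in auto)
  also have "\<dots> = card W" using cardB assms(4) cardW by simp
  finally have "(\<Union>c\<in>C. B c) = W"
    by (intro card_subset_eq[OF finW BW])
  hence cover: "\<exists>c\<in>C. hamming_dist c w \<le> t" if "length w = n" for w
    using that unfolding W_def B_def by blast
  show ?thesis unfolding mdg_connected_def
  proof (intro ballI)
    fix x y assume x: "x \<in> C" and y: "y \<in> C"
    have claim: "\<forall>w c. length w = n \<and> hamming_dist x w = k \<and> c \<in> C \<and> hamming_dist c w \<le> t
        \<longrightarrow> (mdg_adj C)\<^sup>*\<^sup>* x c" for k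
    proof (induction k)
      case 0
      show ?case
      proof (intro allI impI)
        fix w c assume h: "length w = n \<and> hamming_dist x w = 0 \<and> c \<in> C \<and> hamming_dist c w \<le> t"
        hence "w = x" using hd_eq0[of x w] lenC[OF x] by auto
        hence "c = x" using h mind[of c x] x by fastforce
        thus "(mdg_adj C)\<^sup>*\<^sup>* x c" by simp
      qed
    next
      case (Suc k)
      show ?case
      proof (intro allI impI)
        fix w c assume h: "length w = n \<and> hamming_dist x w = Suc k \<and> c \<in> C \<and> hamming_dist c w \<le> t"
        let ?D = "{i. i < length x \<and> x!i \<noteq> w!i}"
        have "card ?D = Suc k" using h unfolding hamming_dist_def by simp
        then obtain j where j: "j \<in> ?D" by (metis card.empty ex_in_conv nat.simps(3))
        define w' where "w' = w[j := x!j]"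
        have lw': "length w' = n" using h by (simp add: w'_def)
        have jn: "j < n" using j lenC[OF x] by simp
        have "{i. i < length x \<and> x!i \<noteq> w'!i} = ?D - {j}"
          using jn h lenC[OF x] by (auto simp: w'_def nth_list_update)
        hence d1: "hamming_dist x w' = k"
          using j \<open>card ?D = Suc k\<close> unfolding hamming_dist_def by (simp add: card_Diff_singleton)
        have "{i. i < length w' \<and> w'!i \<noteq> w!i} \<subseteq> {j}"
          using jn h unfolding w'_def by (auto simp: nth_list_update split: if_splits)
        hence d2: "hamming_dist w' w \<le> 1" unfolding hamming_dist_def
          using card_mono[of "{j}"] by fastforce
        obtain c' where c': "c' \<in> C" "hamming_dist c' w' \<le> t" using cover[OF lw'] by blast
        have IH: "(mdg_adj C)\<^sup>*\<^sup>* x c'" using Suc.IH lw' d1 c' by blast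
        have "hamming_dist c' c \<le> hamming_dist c' w' + hamming_dist w' c"
          by (rule hd_tri) (use lw' lenC c' h in auto)
        also have "hamming_dist w' c \<le> hamming_dist w' w + hamming_dist w c"
          by (rule hd_tri) (use lw' lenC c' h in auto)
        also have "hamming_dist w c = hamming_dist c w"
          by (rule hd_sym) (use lenC h in auto)
        finally have le: "hamming_dist c' c \<le> 2 * t + 1" using c' d2 h by simp
        show "(mdg_adj C)\<^sup>*\<^sup>* x c"
        proof (cases "c' = c")
          case True thus ?thesis using IH by simp
        next
          case False
          hence "hamming_dist c' c = min_dist C" using mind[of c' c] c' h le assms(3) by simp
          hence "mdg_adj C c' c" using False c' h unfolding mdg_adj_def by simp
          with IH show ?thesis by (rule rtranclp.rtrancl_into_rtrancl)
        qed
      qed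
    qed
    have "hamming_dist y y = 0" using hd_eq0[of y y] by simp
    thus "(mdg_adj C)\<^sup>*\<^sup>* x y" using claim[of "hamming_dist x y", rule_format, of y y] y lenC[OF y] by simp
  qed
qed

end
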